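(* Let $\mathbf C\in\mathbb R^{n\times n}$ and $\mathbf C_1,\dots,\mathbf C_m\in\mathbb R^{n\times n}$ be symmetric positive semidefinite matrices with $\sum_{i=1}^m\mathbf C_i=\mathbf C$. Then $$\sum_{i=1}^m\mathbf C_i\mathbf C^\dagger\mathbf C_i\preceq\mathbf C.$$
   Context: $\mathbf C^\dagger$ is the Moore–Penrose pseudoinverse; $\mathbf X\preceq\mathbf Y$ means $\mathbf Y-\mathbf X$ is positive semidefinite. *)

theory Defs
  imports "HOL-Analysis.Analysis"
begin

definition psd :: "real^'n^'n \<Rightarrow> bool" where
  "psd A \<longleftrightarrow> transpose A = A \<and> (\<forall>x. 0 \<le> x \<bullet> (A *v x))"

definition loewner_le :: "real^'n^'n \<Rightarrow> real^'n^'n \<Rightarrow> bool" where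
  "loewner_le X Y \<longleftrightarrow> psd (Y - X)"

definition moore_penrose :: "real^'n^'n \<Rightarrow> real^'n^'n \<Rightarrow> bool" where
  "moore_penrose A X \<longleftrightarrow> A ** X ** A = A \<and> X ** A ** X = X \<and>
     transpose (A ** X) = A ** X \<and> transpose (X ** A) = X ** A"

definition pinv :: "real^'n^'n \<Rightarrow> real^'n^'n" where
  "pinv A = (THE X. moore_penrose A X)"

end

theory Submission imports Defs begin

lemma sym_inner:
  fixes A :: "real^'n^'n"
  assumes "transpose A = A"
  shows "(A *v x) \<bullet> y = x \<bullet> (A *v y)"
  by (metis assms dot_lmul_matrix transpose_matrix_vector)

lemma sym_of_inner:
  fixes A :: "real^'n^'n"
  assumes "\<And>x y. (A *v x) \<bullet> y = x \<bullet> (A *v y)"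
  shows "transpose A = A"
proof -
  have "transpose A *v x = A *v x" for x
  proof -
    have "(transpose A *v x - A *v x) \<bullet> y = 0" for y
      by (simp add: inner_diff_left dot_lmul_matrix assms)
    from this[of "transpose A *v x - A *v x"] show ?thesis by simp
  qed
  then show ?thesis by (simp add: matrix_eq)
qed

lemma mp_exists:
  fixes C :: "real^'n^'n"
  assumes sym: "transpose C = C"
  shows "\<exists>X. moore_penrose C X"
proof -
  define f where "f = (*v) C"
  define R where "R = range f"
  have lf: "Vector_Spaces.linear (*s) (*s) f" unfolding f_def by (rule matrix_vector_mul_linear_gen)
  have fs: "f x \<bullet> y = x \<bullet> f y" for x y unfolding f_def using sym_inner[OF sym] .
  have subR: "vec.subspace R" unfolding R_def
    by (simp add: lf vec.linear_subspace_image vec.subspace_UNIV)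
  have spR: "vec.span R = R" using subR by (simp add: vec.span_eq_iff)
  have rspR: "span R = R" unfolding R_def f_def
    by (metis span_linear_image span_UNIV matrix_vector_mul_linear)
  have fR: "f x \<in> R" for x unfolding R_def by simp
  have inj: "inj_on f R"
  proof (subst vec.linear_inj_on_iff_eq_0[OF lf subR], intro ballI impI)
    fix x assume "x \<in> R" "f x = 0"
    then obtain u where u: "x = f u" unfolding R_def by auto
    have "x \<bullet> x = u \<bullet> f x" using fs u by simp
    with \<open>f x = 0\<close> show "x = 0" by simp
  qed
  obtain g where g: "range g \<subseteq> R" "Vector_Spaces.linear (*s) (*s) g" "\<And>x. x \<in> R \<Longrightarrow> g (f x) = x"
    using vec.linear_inj_on_left_inverse[OF lf, of R] inj spR by auto
  have gR: "g x \<in> R" for x using g(1) by auto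
  have surj: "f (g r) = r" if "r \<in> R" for r
  proof -
    from that obtain u where u: "r = f u" unfolding R_def by auto
    obtain y z where yz: "y \<in> span R" "\<And>w. w \<in> span R \<Longrightarrow> orthogonal z w" "u = y + z"
      using orthogonal_subspace_decomp_exists[of R u] by blast
    have "f z \<bullet> f z = z \<bullet> f (f z)" using fs by simp
    also have "\<dots> = 0" using yz(2)[of "f (f z)"] fR rspR by (simp add: orthogonal_def)
    finally have fz: "f z = 0" by simp
    have "f u = f y" using yz(3) fz vec.linear_add[OF lf] by simp
    then show ?thesis using u g(3) yz(1) rspR by simp
  qed
  have key: "g (f x) \<bullet> y = g (f x) \<bullet> g (f y)" for x y
  proof -
    obtain u where u: "g (f x) = f u" using gR unfolding R_def by blast
    have "f u \<bullet> y = u \<bullet> f y" by (rule fs)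
    also have "\<dots> = u \<bullet> f (g (f y))" using surj fR by simp
    also have "\<dots> = f u \<bullet> g (f y)" using fs by simp
    finally show ?thesis using u by simp
  qed
  have gfsym: "g (f x) \<bullet> y = x \<bullet> g (f y)" for x y
    using key[of x y] key[of y x] by (simp add: inner_commute)
  define X where "X = matrix (g \<circ> g \<circ> f)"
  have lin: "Vector_Spaces.linear (*s) (*s) (g \<circ> g \<circ> f)"
    using lf g(2) by (simp add: Vector_Spaces.linear_compose)
  have Xv: "X *v y = g (g (f y))" for y
    unfolding X_def using matrix_works[OF lin] by simp
  have Cv: "C *v y = f y" for y unfolding f_def by simp
  have gf2: "g (f (f y)) = f y" for y using g(3) fR by simp
  have 1: "C ** X ** C = C"
    by (simp add: matrix_eq Xv Cv gf2 surj fR flip: matrix_vector_mul_assoc)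
  have 2: "X ** C ** X = X"
  proof -
    have "g (g (f (f (g (g (f y)))))) = g (g (f y))" for y
      using gf2 g(3) gR by simp
    then show ?thesis by (simp add: matrix_eq Xv Cv gf2 flip: matrix_vector_mul_assoc)
  qed
  have CX: "(C ** X) *v y = g (f y)" for y
    by (simp add: Xv Cv surj gR flip: matrix_vector_mul_assoc)
  have XC: "(X ** C) *v y = g (f y)" for y
    by (simp add: Xv Cv gf2 flip: matrix_vector_mul_assoc)
  have 3: "transpose (C ** X) = C ** X"
    by (rule sym_of_inner) (simp add: CX gfsym)
  have 4: "transpose (X ** C) = X ** C"
    by (rule sym_of_inner) (simp add: XC gfsym)
  show ?thesis using 1 2 3 4 unfolding moore_penrose_def by blast
qed

lemma mp_unique:
  fixes A X Y :: "real^'n^'n"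
  assumes X: "moore_penrose A X" and Y: "moore_penrose A Y"
  shows "X = Y"
proof -
  note d = moore_penrose_def
  have x1: "A ** X ** A = A" "X ** A ** X = X" "transpose (A ** X) = A ** X" "transpose (X ** A) = X ** A"
    using X unfolding d by auto
  have y1: "A ** Y ** A = A" "Y ** A ** Y = Y" "transpose (A ** Y) = A ** Y" "transpose (Y ** A) = Y ** A"
    using Y unfolding d by auto
  have "X = X ** (A ** X)" using x1(2) by (simp add: matrix_mul_assoc)
  also have "\<dots> = X ** transpose X ** transpose A" using x1(3) by (metis matrix_transpose_mul matrix_mul_assoc)
  also have "transpose A = transpose A ** transpose Y ** transpose A"
    using y1(1) by (metis matrix_transpose_mul matrix_mul_assoc)
  also have "X ** transpose X ** (transpose A ** transpose Y ** transpose A)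
      = X ** transpose (A ** X) ** transpose (A ** Y)"
    by (simp add: matrix_transpose_mul matrix_mul_assoc)
  also have "\<dots> = (X ** A ** X) ** A ** Y" using x1(3) y1(3) by (simp add: matrix_mul_assoc)
  also have "\<dots> = X ** A ** Y" using x1(2) by simp
  finally have eX: "X = X ** A ** Y" .
  have "Y = (Y ** A) ** Y" using y1(2) by (simp add: matrix_mul_assoc)
  also have "\<dots> = transpose A ** transpose Y ** Y" using y1(4) by (metis matrix_transpose_mul)
  also have "transpose A = transpose A ** transpose X ** transpose A"
    using x1(1) by (metis matrix_transpose_mul matrix_mul_assoc)
  also have "(transpose A ** transpose X ** transpose A) ** transpose Y ** Y
      = transpose (X ** A) ** transpose (Y ** A) ** Y"
    by (simp add: matrix_transpose_mul matrix_mul_assoc)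
  also have "\<dots> = X ** A ** (Y ** A ** Y)" using x1(4) y1(4) by (simp add: matrix_mul_assoc)
  also have "\<dots> = X ** A ** Y" using y1(2) by simp
  finally show ?thesis using eX by simp
qed

lemma pinv_mp:
  fixes C :: "real^'n^'n"
  assumes "transpose C = C"
  shows "moore_penrose C (pinv C)"
  unfolding pinv_def
  by (rule theI') (use mp_exists[OF assms] mp_unique in blast)

lemma pinv_sym:
  fixes C :: "real^'n^'n"
  assumes sym: "transpose C = C"
  shows "transpose (pinv C) = pinv C"
proof -
  let ?X = "pinv C"
  have X: "moore_penrose C ?X" by (rule pinv_mp[OF sym])
  have "moore_penrose C (transpose ?X)"
    using X sym unfolding moore_penrose_def
    by (metis matrix_transpose_mul matrix_mul_assoc transpose_transpose)
  then show ?thesis using mp_unique X by blast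
qed

lemma sum_mv:
  fixes A :: "'i \<Rightarrow> real^'n^'m"
  shows "sum A I *v x = (\<Sum>i\<in>I. A i *v x)"
proof (induction I rule: infinite_finite_induct)
  case (infinite I) then show ?case by simp
next
  case empty then show ?case by (simp add: matrix_vector_mult_def vec_eq_iff)
next
  case (insert i I) then show ?case by (simp add: matrix_vector_mult_add_rdistrib)
qed


theorem lemma1:
  fixes C :: "real^'n^'n" and Cs :: "nat \<Rightarrow> real^'n^'n" and m :: nat
  assumes "psd C"
    and "\<And>i. i \<in> {1..m} \<Longrightarrow> psd (Cs i)"
    and "(\<Sum>i=1..m. Cs i) = C"
  shows "loewner_le (\<Sum>i=1..m. Cs i ** pinv C ** Cs i) C"
proof -
  let ?X = "pinv C"
  have symC: "transpose C = C" using assms(1) unfolding psd_def by simp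
  have MP: "moore_penrose C ?X" by (rule pinv_mp[OF symC])
  have symX: "transpose ?X = ?X" by (rule pinv_sym[OF symC])
  have XCX: "?X *v (C *v (?X *v u)) = ?X *v u" for u
    using MP unfolding moore_penrose_def by (simp add: matrix_vector_mul_assoc flip: matrix_mul_assoc)
  have Xs: "(?X *v a) \<bullet> b = a \<bullet> (?X *v b)" for a b by (rule sym_inner[OF symX])
  have Cs_sym: "\<And>a b. (Cs i *v a) \<bullet> b = a \<bullet> (Cs i *v b)" if "i \<in> {1..m}" for i
    using assms(2)[OF that] unfolding psd_def by (simp add: sym_inner)
  have Cs_nn: "0 \<le> a \<bullet> (Cs i *v a)" if "i \<in> {1..m}" for i a
    using assms(2)[OF that] unfolding psd_def by simp
  have Cv: "C *v a = (\<Sum>j=1..m. Cs j *v a)" for a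
    using assms(3) sum_mv[of Cs "{1..m}" a] by simp
  have le_C: "a \<bullet> (Cs i *v a) \<le> a \<bullet> (C *v a)" if "i \<in> {1..m}" for i a
  proof -
    have "a \<bullet> (C *v a) = (\<Sum>j=1..m. a \<bullet> (Cs j *v a))" by (simp add: Cv inner_sum_right)
    moreover have "a \<bullet> (Cs i *v a) \<le> (\<Sum>j=1..m. a \<bullet> (Cs j *v a))"
      by (rule member_le_sum) (use that Cs_nn in auto)
    ultimately show ?thesis by simp
  qed
  have per: "x \<bullet> (Cs i *v (?X *v (Cs i *v x))) \<le> x \<bullet> (Cs i *v x)" if i: "i \<in> {1..m}" for i x
  proof -
    define u where "u = Cs i *v x"
    define w where "w = ?X *v u"
    have q1: "x \<bullet> (Cs i *v w) = u \<bullet> w" unfolding u_def using Cs_sym[OF i] by simp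
    have q2: "w \<bullet> (Cs i *v x) = u \<bullet> w" unfolding u_def by (simp add: inner_commute)
    have "0 \<le> (x - w) \<bullet> (Cs i *v (x - w))" by (rule Cs_nn[OF i])
    also have "\<dots> = x \<bullet> (Cs i *v x) - x \<bullet> (Cs i *v w) - w \<bullet> (Cs i *v x) + w \<bullet> (Cs i *v w)"
      by (simp add: matrix_vector_mult_diff_distrib inner_diff_left inner_diff_right)
    also have "w \<bullet> (Cs i *v w) \<le> w \<bullet> (C *v w)" by (rule le_C[OF i])
    also have "w \<bullet> (C *v w) = u \<bullet> (?X *v (C *v w))" unfolding w_def by (simp add: Xs)
    also have "\<dots> = u \<bullet> w" unfolding w_def by (simp add: XCX)
    finally have "0 \<le> x \<bullet> (Cs i *v x) - u \<bullet> w" using q1 q2 by simp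
    moreover have "x \<bullet> (Cs i *v (?X *v (Cs i *v x))) = u \<bullet> w"
      using q1 unfolding w_def u_def by simp
    ultimately show ?thesis by simp
  qed
  let ?S = "\<Sum>i=1..m. Cs i ** ?X ** Cs i"
  have Sv: "?S *v a = (\<Sum>i=1..m. Cs i *v (?X *v (Cs i *v a)))" for a
    by (simp only: sum_mv) (simp flip: matrix_vector_mul_assoc)
  have Dv: "(C - ?S) *v a = (\<Sum>i=1..m. Cs i *v a - Cs i *v (?X *v (Cs i *v a)))" for a
    unfolding matrix_vector_mult_diff_rdistrib Sv Cv by (rule sum_subtractf[symmetric])
  have "transpose (C - ?S) = C - ?S"
  proof (rule sym_of_inner)
    fix a b
    have "(Cs i *v a - Cs i *v (?X *v (Cs i *v a))) \<bullet> b
        = a \<bullet> (Cs i *v b - Cs i *v (?X *v (Cs i *v b)))" if i: "i \<in> {1..m}" for i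
      using Cs_sym[OF i] Xs by (simp add: inner_diff_left inner_diff_right)
    then show "((C - ?S) *v a) \<bullet> b = a \<bullet> ((C - ?S) *v b)"
      unfolding Dv inner_sum_left inner_sum_right by (intro sum.cong) auto
  qed
  moreover have "0 \<le> x \<bullet> ((C - ?S) *v x)" for x
    unfolding Dv inner_sum_right
    by (rule sum_nonneg) (use per in \<open>simp add: inner_diff_right\<close>)
  ultimately show ?thesis unfolding loewner_le_def psd_def by blast
qed

end
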